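(* For any integers $n\ge1$ and $\lambda\ge1$, the minimum cost of a solution of the TBI problem with time bound $\lambda$ on a path with $n$ nodes all of which have threshold $1$ is $\lceil n/(2\lambda+1)\rceil$.
   Context: Influence model: a network is a graph $G=(V,E)$; $N(v)$ is the neighbourhood of $v$. Thresholds $t:V\to\{1,2,\dots\}$. An incentive function is $p:V\to\{0,1,2,\dots\}$ with $0\le p(v)\le t(v)$, of cost $\sum_v p(v)$. The influence process: $\mathsf{Influenced}[p,0]=\{v: p(v)=t(v)\}$ and, for $\ell>0$, $\mathsf{Influenced}[p,\ell]=\mathsf{Influenced}[p,\ell-1]\cup\{v: |N(v)\cap \mathsf{Influenced}[p,\ell-1]|\ge t(v)-p(v)\}$. The TBI problem with time bound $\lambda$: find $p$ of minimum cost with $\mathsf{Influenced}[p,\lambda]=V$. A path on $n$ nodes has nodes $0,\dots,n-1$ and edges $\{i,i+1\}$, $0\le i\le n-2$. *)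

theory Defs
  imports Complex_Main
begin

text \<open>Thresholds
t and incentives p are natural-number-valued functions (only values on V matter).\<close>

primrec influenced :: "'a set \<Rightarrow> ('a \<Rightarrow> 'a set) \<Rightarrow> ('a \<Rightarrow> nat) \<Rightarrow> ('a \<Rightarrow> nat) \<Rightarrow> nat \<Rightarrow> 'a set" where
  "influenced V N t p 0 = {v \<in> V. p v = t v}"
| "influenced V N t p (Suc l) = influenced V N t p l \<union>
      {v \<in> V. card (N v \<inter> influenced V N t p l) \<ge> t v - p v}"

definition incentive :: "'a set \<Rightarrow> ('a \<Rightarrow> nat) \<Rightarrow> ('a \<Rightarrow> nat) \<Rightarrow> bool" where
  "incentive V t p \<longleftrightarrow> (\<forall>v\<in>V. p v \<le> t v)"

definition cost :: "'a set \<Rightarrow> ('a \<Rightarrow> nat) \<Rightarrow> nat" where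
  "cost V p = (\<Sum>v\<in>V. p v)"

definition tbi_solution :: "'a set \<Rightarrow> ('a \<Rightarrow> 'a set) \<Rightarrow> ('a \<Rightarrow> nat) \<Rightarrow> nat \<Rightarrow> ('a \<Rightarrow> nat) \<Rightarrow> bool" where
  "tbi_solution V N t lam p \<longleftrightarrow> incentive V t p \<and> influenced V N t p lam = V"

definition tbi_opt :: "'a set \<Rightarrow> ('a \<Rightarrow> 'a set) \<Rightarrow> ('a \<Rightarrow> nat) \<Rightarrow> nat \<Rightarrow> nat" where
  "tbi_opt V N t lam = (LEAST c. \<exists>p. tbi_solution V N t lam p \<and> cost V p = c)"

definition path_nodes :: "nat \<Rightarrow> nat set" where
  "path_nodes n = {..<n}"

definition path_nbr :: "nat \<Rightarrow> nat \<Rightarrow> nat set" where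
  "path_nbr n i = {j. j < n \<and> i < n \<and> (j = i + 1 \<or> i = j + 1)}"

end

theory Submission
  imports Defs
begin

lemma infl_char:
  assumes inc: "\<forall>v<n. p v \<le> 1"
  shows "influenced {..<n} (path_nbr n) (\<lambda>_. 1) p l =
    {v. v < n \<and> (\<exists>u<n. p u = 1 \<and> u \<le> v + l \<and> v \<le> u + l)}"
proof (induction l)
  case 0
  show ?case by auto
next
  case (Suc l)
  define A where "A = {v. v < n \<and> (\<exists>u<n. p u = 1 \<and> u \<le> v + l \<and> v \<le> u + l)}"
  have fin: "finite (path_nbr n v \<inter> A)" for v
    by (rule finite_subset[of _ "{..<n}"]) (auto simp: path_nbr_def)
  have "influenced {..<n} (path_nbr n) (\<lambda>_. 1) p (Suc l) =
     A \<union> {v \<in> {..<n}. card (path_nbr n v \<inter> A) \<ge> 1 - p v}"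
    using Suc by (simp add: A_def)
  also have "\<dots> = {v. v < n \<and> (\<exists>u<n. p u = 1 \<and> u \<le> v + Suc l \<and> v \<le> u + Suc l)}"
  proof (intro equalityI subsetI)
    fix v assume "v \<in> A \<union> {v \<in> {..<n}. card (path_nbr n v \<inter> A) \<ge> 1 - p v}"
    then consider "v \<in> A" | "v < n" "card (path_nbr n v \<inter> A) \<ge> 1 - p v" by blast
    then show "v \<in> {v. v < n \<and> (\<exists>u<n. p u = 1 \<and> u \<le> v + Suc l \<and> v \<le> u + Suc l)}"
    proof cases
      case 1
      then obtain u where "v < n" "u < n" "p u = 1" "u \<le> v + l" "v \<le> u + l"
        unfolding A_def by blast
      then show ?thesis by (intro CollectI conjI exI[of _ u]) simp_all
    next
      case 2
      show ?thesis
      proof (cases "p v \<ge> 1")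
        case True
        have "p v \<le> 1" using inc 2(1) by blast
        then have "p v = 1" using True by linarith
        then show ?thesis using 2(1) by (intro CollectI conjI exI[of _ v]) simp_all
      next
        case False
        then have "card (path_nbr n v \<inter> A) \<noteq> 0" using 2(2) by linarith
        then have "path_nbr n v \<inter> A \<noteq> {}" by (metis card.empty)
        then obtain w where w: "w \<in> path_nbr n v" "w \<in> A" by blast
        from w(2) obtain u where "u < n" "p u = 1" "u \<le> w + l" "w \<le> u + l"
          unfolding A_def by blast
        moreover have "w = v + 1 \<or> v = w + 1" using w(1) unfolding path_nbr_def by blast
        ultimately have "u \<le> v + Suc l \<and> v \<le> u + Suc l" by linarith
        then show ?thesis using \<open>u < n\<close> \<open>p u = 1\<close> 2(1) by blast
      qed
    qed
  next
    fix v assume "v \<in> {v. v < n \<and> (\<exists>u<n. p u = 1 \<and> u \<le> v + Suc l \<and> v \<le> u + Suc l)}"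
    then obtain u where u: "v < n" "u < n" "p u = 1" "u \<le> v + Suc l" "v \<le> u + Suc l" by blast
    show "v \<in> A \<union> {v \<in> {..<n}. card (path_nbr n v \<inter> A) \<ge> 1 - p v}"
    proof (cases "u \<le> v + l \<and> v \<le> u + l")
      case True
      then have "v \<in> A" using u unfolding A_def by blast
      then show ?thesis by blast
    next
      case False
      then obtain w where w: "w \<in> path_nbr n v" "w \<in> A"
      proof (cases "u = v + Suc l")
        case True
        have "v + 1 < n" using True u(2) by linarith
        then have "v + 1 \<in> path_nbr n v" using u(1) unfolding path_nbr_def by blast
        moreover have "u \<le> (v + 1) + l \<and> v + 1 \<le> u + l" using True by linarith
        then have "v + 1 \<in> A" using \<open>v + 1 < n\<close> u(2,3) unfolding A_def by blast
        ultimately show ?thesis using that by blast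
      next
        case F2: False
        then have vu: "v = u + Suc l" using False u(4,5) by linarith
        then have "v - 1 < n" "v = (v - 1) + 1" using u(1) by linarith+
        then have "v - 1 \<in> path_nbr n v" using u(1) unfolding path_nbr_def by blast
        moreover have "u \<le> (v - 1) + l \<and> v - 1 \<le> u + l" using vu by linarith
        then have "v - 1 \<in> A" using \<open>v - 1 < n\<close> u(2,3) unfolding A_def by blast
        ultimately show ?thesis using that by blast
      qed
      then have "path_nbr n v \<inter> A \<noteq> {}" by blast
      then have "card (path_nbr n v \<inter> A) > 0" using fin card_gt_0_iff by blast
      then have "card (path_nbr n v \<inter> A) \<ge> 1 - p v" by linarith
      then show ?thesis using u(1) by blast
    qed
  qed
  finally show ?case .
qed

lemma lower:
  assumes sol: "tbi_solution (path_nodes n) (path_nbr n) (\<lambda>_. 1) lam p"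
  shows "n \<le> cost (path_nodes n) p * (2 * lam + 1)"
proof -
  have inc: "\<forall>v<n. p v \<le> 1" using sol by (simp add: tbi_solution_def incentive_def path_nodes_def)
  define S where "S = {u. u < n \<and> p u = 1}"
  have finS: "finite S" unfolding S_def by simp
  have cov: "{..<n} \<subseteq> (\<Union>u\<in>S. {u - lam..u + lam})"
  proof
    fix v assume v: "v \<in> {..<n}"
    then have "v \<in> influenced {..<n} (path_nbr n) (\<lambda>_. 1) p lam"
      using sol by (simp add: tbi_solution_def path_nodes_def)
    then have "v \<in> {v. v < n \<and> (\<exists>u<n. p u = 1 \<and> u \<le> v + lam \<and> v \<le> u + lam)}"
      unfolding infl_char[OF inc] .
    then obtain u where u: "u < n" "p u = 1" "u \<le> v + lam" "v \<le> u + lam"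
      by blast
    have "u \<in> S" using u unfolding S_def by blast
    moreover have "u - lam \<le> v" using u(3) by arith
    moreover have "v \<le> u + lam" using u(4) .
    ultimately show "v \<in> (\<Union>u\<in>S. {u - lam..u + lam})" by auto
  qed
  have finU: "finite (\<Union>u\<in>S. {u - lam..u + lam})" using finS by simp
  have "n = card {..<n}" by simp
  also have "\<dots> \<le> card (\<Union>u\<in>S. {u - lam..u + lam})"
    by (rule card_mono[OF finU cov])
  also have "\<dots> \<le> (\<Sum>u\<in>S. card {u - lam..u + lam})" by (rule card_UN_le[OF finS])
  also have "\<dots> \<le> (\<Sum>u\<in>S. 2 * lam + 1)"
  proof (rule sum_mono)
    fix u
    show "card {u - lam..u + lam} \<le> 2 * lam + 1"
      using card_atLeastAtMost[of "u - lam" "u + lam"] by arith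
  qed
  also have "\<dots> = card S * (2 * lam + 1)" by simp
  also have "card S \<le> cost (path_nodes n) p"
  proof -
    have "(\<Sum>v\<in>S. p v) = (\<Sum>v\<in>S. 1)"
      by (rule sum.cong) (simp_all add: S_def)
    then have "card S = (\<Sum>v\<in>S. p v)" by simp
    also have "\<dots> \<le> (\<Sum>v\<in>{..<n}. p v)" by (rule sum_mono2) (auto simp: S_def)
    finally show ?thesis by (simp add: cost_def path_nodes_def)
  qed
  then have "card S * (2 * lam + 1) \<le> cost (path_nodes n) p * (2 * lam + 1)"
    by (rule mult_right_mono) simp
  finally show ?thesis .
qed

lemma ceil_nat:
  fixes n m :: nat
  assumes "m > 0"
  shows "\<lceil>real n / real m\<rceil> = int ((n + m - 1) div m)"
proof (rule ceiling_unique)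
  define c where "c = (n + m - 1) div m"
  have "c * m + (n + m - 1) mod m = n + m - 1" by (simp add: c_def)
  moreover have "(n + m - 1) mod m < m" using assms by simp
  ultimately have a: "n \<le> c * m" "c * m < n + m" using assms by linarith+
  from a(1) have "real n \<le> real c * real m" by (metis of_nat_le_iff of_nat_mult)
  then show "real n / real m \<le> real_of_int (int c)" using assms by (simp add: divide_le_eq)
  from a(2) have "real c * real m < real n + real m" by (metis of_nat_add of_nat_less_iff of_nat_mult)
  then have "(real c - 1) * real m < real n" by (simp add: algebra_simps)
  then show "real_of_int (int c) - 1 < real n / real m" using assms by (simp add: less_divide_eq)
qed

theorem lemma5:
  fixes n lam :: nat
  assumes "n \<ge> 1" and "lam \<ge> 1"
  shows "(\<exists>p. tbi_solution (path_nodes n) (path_nbr n) (\<lambda>_. 1) lam p)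
    \<and> int (tbi_opt (path_nodes n) (path_nbr n) (\<lambda>_. 1) lam)
        = \<lceil>real n / real (2 * lam + 1)\<rceil>"
proof -
  define m where "m = 2 * lam + 1"
  define c where "c = (n + m - 1) div m"
  define f where "f k = min (k * m + lam) (n - 1)" for k
  define p0 where "p0 v = (if v \<in> f ` {..<c} then 1 else 0 :: nat)" for v
  have mpos: "m > 0" by (simp add: m_def)
  have ncm: "n \<le> c * m"
  proof -
    have "c * m + (n + m - 1) mod m = n + m - 1" by (simp add: c_def)
    moreover have "(n + m - 1) mod m < m" using mpos by simp
    ultimately show ?thesis using mpos by linarith
  qed
  have inc0: "\<forall>v<n. p0 v \<le> 1" by (simp add: p0_def)
  have fimg: "f ` {..<c} \<subseteq> {..<n}" using assms(1) by (auto simp: f_def)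
  have sol: "tbi_solution (path_nodes n) (path_nbr n) (\<lambda>_. 1) lam p0"
    unfolding tbi_solution_def
  proof
    show "incentive (path_nodes n) (\<lambda>_. 1) p0" by (simp add: incentive_def p0_def)
    have "{..<n} \<subseteq> influenced {..<n} (path_nbr n) (\<lambda>_. 1) p0 lam"
    proof
      fix v assume v: "v \<in> {..<n}"
      define k where "k = v div m"
      have kv: "k * m \<le> v" "v < k * m + m"
        using mpos by (simp_all add: k_def) (metis div_mult_mod_eq mod_less_divisor add_less_cancel_left mult.commute)
      have kc: "k < c"
      proof (rule ccontr)
        assume "\<not> k < c"
        then have "c * m \<le> k * m" by simp
        moreover have "v < n" using v by simp
        ultimately show False using kv ncm by linarith
      qed
      have "p0 (f k) = 1" using kc by (simp add: p0_def)
      moreover have "f k < n" using assms(1) by (simp add: f_def)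
      moreover have "f k \<le> v + lam \<and> v \<le> f k + lam"
        using kv v by (auto simp: f_def m_def)
      ultimately show "v \<in> influenced {..<n} (path_nbr n) (\<lambda>_. 1) p0 lam"
        using infl_char[OF inc0] v by auto
    qed
    moreover have "influenced {..<n} (path_nbr n) (\<lambda>_. 1) p0 lam \<subseteq> {..<n}"
      using infl_char[OF inc0] by auto
    ultimately show "influenced (path_nodes n) (path_nbr n) (\<lambda>_. 1) p0 lam = path_nodes n"
      by (auto simp: path_nodes_def)
  qed
  have low: "c \<le> cost (path_nodes n) p" if "tbi_solution (path_nodes n) (path_nbr n) (\<lambda>_. 1) lam p" for p
  proof -
    have "n \<le> cost (path_nodes n) p * m" using lower[OF that] by (simp add: m_def)
    then have "(n + m - 1) div m \<le> (cost (path_nodes n) p * m + (m - 1)) div m"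
      using mpos by (intro div_le_mono) linarith
    also have "\<dots> = cost (path_nodes n) p + (m - 1) div m"
      by (rule div_mult_self3) (use mpos in simp)
    also have "(m - 1) div m = 0" using mpos by simp
    finally show ?thesis by (simp add: c_def)
  qed
  have "cost (path_nodes n) p0 = card (f ` {..<c})"
  proof -
    have "cost (path_nodes n) p0 = (\<Sum>v\<in>{..<n}. if v \<in> f ` {..<c} then 1 else 0)"
      by (simp add: cost_def path_nodes_def p0_def)
    also have "\<dots> = card ({..<n} \<inter> f ` {..<c})" by (simp add: sum.If_cases)
    also have "\<dots> = card (f ` {..<c})" using fimg by (simp add: Int_absorb1)
    finally show ?thesis .
  qed
  also have "\<dots> \<le> c" using card_image_le[of "{..<c}" f] by simp
  finally have "cost (path_nodes n) p0 = c" using low[OF sol] by simp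
  then have opt: "tbi_opt (path_nodes n) (path_nbr n) (\<lambda>_. 1) lam = c"
    unfolding tbi_opt_def
    by (intro Least_equality) (use sol low in auto)
  show ?thesis using sol opt ceil_nat[OF mpos, of n] by (auto simp: m_def c_def)
qed

end
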